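(* Let $(\Omega,\mathcal{F},P)$ be a probability space and $X$ a scalar random variable with distribution $\pi$ and upper bound $\ell\in\mathbb{R}$ with $\mathbb{P}_\pi[X\le\ell]=1$. Let $g$ be a closed convex function with $g(1)=0$, $\beta\ge 0$, $\mathrm{ER}_{g,\beta}$ the $g$-entropic risk measure with divergence level $\beta$, and suppose $g^*:\mathbb{R}\to\mathbb{R}$ (the convex conjugate of $g$) is real-valued. Let $L(x,\mu,t)=t\left(\mu+g^*\left(\frac{x}{t}-\mu+\beta\right)\right)$ and let $u_b:D\subset\mathbb{R}^2\to\mathbb{R}$ satisfy $\mathbb{P}_\pi[L(X,\mu,t)\le u_b(\mu,t)]=1$ for all $\mu\in\mathbb{R}$, $t>0$. Let $\gamma\in[0,1)$, $\epsilon\in(0,1)$, and let $x_1,\dots,x_N$ be independent samples of $X$ with $N \ge \frac{\log(1-\gamma)}{\log(1-\epsilon)}$, and $\zeta^*_N(\mu,t)=\max_{1\le k\le N}L(x_k,\mu,t)$. Then \[ \mathbb{P}^N_{\pi}\left[\mathrm{ER}_{g,\beta}(X) \le \inf_{t>0,\ \mu\in\mathbb{R}} \zeta^*_N(\mu,t)(1-\epsilon)+u_b(\mu,t)\epsilon\right] \ge \gamma. \]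
   Context: $\mathrm{ER}_{g,\beta}(X)=\sup\{\mathbb{E}_Q[X] : Q\ll P,\ \int g(\frac{dQ}{dP})dP\le\beta\}$. The convex conjugate is $g^*(y)=\sup_x(xy-g(x))$. $\zeta^*_N(\mu,t)$ is the solution of $\min_\zeta\zeta$ subject to $\zeta\ge L(x_i,\mu,t)$ for all $i$. $\mathbb{P}^N_\pi$ is the $N$-fold product measure governing the i.i.d. sample. *)

theory Defs
  imports "HOL-Probability.Probability"
begin

definition epigraph :: "(real \<Rightarrow> ereal) \<Rightarrow> (real \<times> real) set" where
  "epigraph g = {(x, y). g x \<le> ereal y}"

definition closed_convex_fun :: "(real \<Rightarrow> ereal) \<Rightarrow> bool" where
  "closed_convex_fun g \<longleftrightarrow> convex (epigraph g) \<and> closed (epigraph g)"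

definition conj_fun :: "(real \<Rightarrow> ereal) \<Rightarrow> real \<Rightarrow> ereal" where
  "conj_fun g y = (SUP x. ereal (x * y) - g x)"

definition ext_integral :: "'a measure \<Rightarrow> ('a \<Rightarrow> ereal) \<Rightarrow> ereal" where
  "ext_integral M h =
     enn2ereal (\<integral>\<^sup>+ w. e2ennreal (max 0 (h w)) \<partial>M)
   - enn2ereal (\<integral>\<^sup>+ w. e2ennreal (max 0 (- h w)) \<partial>M)"

definition entropic_risk ::
  "'a measure \<Rightarrow> (real \<Rightarrow> ereal) \<Rightarrow> real \<Rightarrow> ('a \<Rightarrow> real) \<Rightarrow> ereal" where
  "entropic_risk M g \<beta> X =
     (SUP Q \<in> {Q. sets Q = sets M \<and> prob_space Q \<and> absolutely_continuous M Q \<and>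
                ext_integral M (\<lambda>w. g (enn2real (RN_deriv M Q w))) \<le> ereal \<beta>}.
        ext_integral Q (\<lambda>w. ereal (X w)))"

definition Lfun :: "(real \<Rightarrow> ereal) \<Rightarrow> real \<Rightarrow> real \<Rightarrow> real \<Rightarrow> real \<Rightarrow> real" where
  "Lfun g \<beta> x \<mu> t = t * (\<mu> + real_of_ereal (conj_fun g (x / t - \<mu> + \<beta>)))"

text \<open>zeta*_N(mu,t): optimal value of min zeta s.t. zeta >= L(x_i,mu,t), i.e. the max.\<close>
definition zeta_star :: "(real \<Rightarrow> ereal) \<Rightarrow> real \<Rightarrow> nat \<Rightarrow> (nat \<Rightarrow> real) \<Rightarrow> real \<Rightarrow> real \<Rightarrow> real" where
  "zeta_star g \<beta> N xs \<mu> t = Max ((\<lambda>k. Lfun g \<beta> (xs k) \<mu> t) ` {..<N})"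

end

theory Submission
  imports Defs
begin

lemma g_not_minf:
  fixes g :: "real \<Rightarrow> ereal"
  assumes fin: "\<forall>y. conj_fun g y \<noteq> \<infinity> \<and> conj_fun g y \<noteq> -\<infinity>"
  shows "g z \<noteq> -\<infinity>"
proof
  assume a: "g z = -\<infinity>"
  have le: "ereal (z * 0) - g z \<le> conj_fun g 0"
    unfolding conj_fun_def by (rule SUP_upper) auto
  then have "conj_fun g 0 = \<infinity>" using a by simp
  with fin show False by blast
qed

lemma conj_FY:
  fixes g :: "real \<Rightarrow> ereal"
  assumes fin: "\<forall>y. conj_fun g y \<noteq> \<infinity> \<and> conj_fun g y \<noteq> -\<infinity>"
    and gz: "g z \<noteq> \<infinity>"
  shows "z * y - real_of_ereal (g z) \<le> real_of_ereal (conj_fun g y)"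
proof -
  have le: "ereal (z * y) - g z \<le> conj_fun g y"
    unfolding conj_fun_def by (rule SUP_upper) auto
  obtain r where r: "g z = ereal r" using gz g_not_minf[OF fin, of z] by (cases "g z") auto
  obtain c where c: "conj_fun g y = ereal c" using fin by (cases "conj_fun g y") auto
  show ?thesis using le r c by simp
qed

lemma g_lower:
  fixes g :: "real \<Rightarrow> ereal"
  assumes fin: "\<forall>y. conj_fun g y \<noteq> \<infinity> \<and> conj_fun g y \<noteq> -\<infinity>"
  shows "g z \<ge> ereal (- real_of_ereal (conj_fun g 0))"
proof (cases "g z = \<infinity>")
  case False
  from conj_FY[OF fin False, of 0] g_not_minf[OF fin, of z]
  show ?thesis by (cases "g z") auto
qed simp

lemma conj_le:
  assumes "\<And>z. ereal (z * y) - g z \<le> B"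
  shows "conj_fun g y \<le> B"
  unfolding conj_fun_def using assms by (intro SUP_least) auto

lemma conj_convex:
  fixes g :: "real \<Rightarrow> ereal"
  assumes fin: "\<forall>y. conj_fun g y \<noteq> \<infinity> \<and> conj_fun g y \<noteq> -\<infinity>"
  shows "convex_on UNIV (\<lambda>y. real_of_ereal (conj_fun g y))"
proof (rule convex_onI)
  fix t :: real and a b :: real
  assume t: "0 < t" "t < 1" and "a \<in> UNIV" "b \<in> UNIV"
  let ?c = "\<lambda>y. real_of_ereal (conj_fun g y)"
  have cr: "conj_fun g y = ereal (?c y)" for y using fin by (cases "conj_fun g y") auto
  have key: "ereal (z * ((1 - t) * a + t * b)) - g z \<le> ereal ((1 - t) * ?c a + t * ?c b)" for z
  proof (cases "g z = \<infinity>")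
    case True then show ?thesis by simp
  next
    case False
    have n: "g z \<noteq> -\<infinity>" using g_not_minf[OF fin] .
    have 1: "z * a - real_of_ereal (g z) \<le> ?c a" using conj_FY[OF fin False] .
    have 2: "z * b - real_of_ereal (g z) \<le> ?c b" using conj_FY[OF fin False] .
    have "z * ((1 - t) * a + t * b) - real_of_ereal (g z)
        = (1 - t) * (z * a - real_of_ereal (g z)) + t * (z * b - real_of_ereal (g z))"
      by (simp add: algebra_simps)
    also have "\<dots> \<le> (1 - t) * ?c a + t * ?c b"
      using 1 2 t by (intro add_mono mult_left_mono) auto
    finally have r: "z * ((1 - t) * a + t * b) - real_of_ereal (g z) \<le> (1 - t) * ?c a + t * ?c b" .
    obtain gr where "g z = ereal gr" using False n by (cases "g z") auto
    with r show ?thesis by simp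
  qed
  have "conj_fun g ((1 - t) * a + t * b) \<le> ereal ((1 - t) * ?c a + t * ?c b)"
    by (rule conj_le[OF key])
  then have "ereal (?c ((1 - t) * a + t * b)) \<le> ereal ((1 - t) * ?c a + t * ?c b)"
    using cr[of "(1 - t) * a + t * b"] by metis
  then show "?c ((1 - t) *\<^sub>R a + t *\<^sub>R b) \<le> (1 - t) * ?c a + t * ?c b"
    by simp
qed simp

lemma conj_cont:
  fixes g :: "real \<Rightarrow> ereal"
  assumes fin: "\<forall>y. conj_fun g y \<noteq> \<infinity> \<and> conj_fun g y \<noteq> -\<infinity>"
  shows "continuous_on UNIV (\<lambda>y. real_of_ereal (conj_fun g y))"
  by (rule convex_on_continuous[OF open_UNIV conj_convex[OF fin]])

lemma L_cont:
  fixes g :: "real \<Rightarrow> ereal"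
  assumes fin: "\<forall>y. conj_fun g y \<noteq> \<infinity> \<and> conj_fun g y \<noteq> -\<infinity>"
  shows "continuous_on UNIV (\<lambda>x. Lfun g \<beta> x \<mu> t)"
proof -
  have e: "(\<lambda>x. Lfun g \<beta> x \<mu> t) = (\<lambda>x. t * (\<mu> + real_of_ereal (conj_fun g (x * inverse t - \<mu> + \<beta>))))"
    by (simp add: Lfun_def divide_inverse)
  have c1: "continuous_on UNIV (\<lambda>x::real. x * inverse t - \<mu> + \<beta>)"
    by (intro continuous_on_add continuous_on_diff continuous_on_mult continuous_on_id continuous_on_const)
  have c2: "continuous_on UNIV (\<lambda>x. real_of_ereal (conj_fun g (x * inverse t - \<mu> + \<beta>)))"
    by (rule continuous_on_compose2[OF conj_cont[OF fin] c1]) auto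
  show ?thesis unfolding e
    by (intro continuous_on_mult continuous_on_add continuous_on_const c2)
qed

lemma g_meas:
  fixes g :: "real \<Rightarrow> ereal"
  assumes fin: "\<forall>y. conj_fun g y \<noteq> \<infinity> \<and> conj_fun g y \<noteq> -\<infinity>"
    and cc: "closed_convex_fun g"
  shows "g \<in> borel_measurable borel"
proof -
  have cl: "closed {v. g v \<le> ereal c}" for c
  proof -
    have "{v. g v \<le> ereal c} = (\<lambda>v. (v, c)) -` epigraph g"
      by (auto simp: epigraph_def)
    moreover have "closed ((\<lambda>v. (v, c)) -` epigraph g)"
      using cc unfolding closed_convex_fun_def
      by (intro continuous_closed_vimage) (auto intro!: continuous_intros)
    ultimately show ?thesis by simp
  qed
  show ?thesis
    unfolding borel_measurable_ereal_iff_Ioi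
  proof
    fix a :: ereal
    show "g -` {a<..} \<inter> space borel \<in> sets borel"
    proof (cases a)
      case (real c)
      have "g -` {a<..} = - {v. g v \<le> ereal c}" using real by auto
      then show ?thesis using cl[of c] by (auto intro: borel_open)
    next
      case PInf
      have "g -` {a<..} = {}" using PInf by auto
      then show ?thesis by simp
    next
      case MInf
      have "g -` {a<..} = UNIV" using MInf g_not_minf[OF fin] by auto
      then show ?thesis by simp
    qed
  qed
qed

lemma ext_integral_real:
  fixes h :: "'a \<Rightarrow> ereal"
  assumes h[measurable]: "h \<in> borel_measurable M"
    and int: "integrable M (\<lambda>w. real_of_ereal (h w))"
    and fin: "AE w in M. \<bar>h w\<bar> \<noteq> \<infinity>"
  shows "ext_integral M h = ereal (\<integral>w. real_of_ereal (h w) \<partial>M)"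
proof -
  let ?r = "\<lambda>w. real_of_ereal (h w)"
  have intp: "integrable M (\<lambda>w. max 0 (?r w))" using int by (intro integrable_max) auto
  have intn: "integrable M (\<lambda>w. max 0 (- ?r w))" using int by (intro integrable_max) auto
  have 1: "(\<integral>\<^sup>+ w. e2ennreal (max 0 (h w)) \<partial>M) = ennreal (\<integral>w. max 0 (?r w) \<partial>M)"
  proof -
    have "(\<integral>\<^sup>+ w. e2ennreal (max 0 (h w)) \<partial>M) = (\<integral>\<^sup>+ w. ennreal (max 0 (?r w)) \<partial>M)"
    proof (rule nn_integral_cong_AE)
      show "AE w in M. e2ennreal (max 0 (h w)) = ennreal (max 0 (?r w))"
        using fin
      proof (rule eventually_mono)
        fix w assume "\<bar>h w\<bar> \<noteq> \<infinity>"
        then obtain r where "h w = ereal r" by (cases "h w") auto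
        then show "e2ennreal (max 0 (h w)) = ennreal (max 0 (?r w))"
          by (simp add: zero_ereal_def flip: ereal_max)
      qed
    qed
    also have "\<dots> = ennreal (\<integral>w. max 0 (?r w) \<partial>M)"
      by (rule nn_integral_eq_integral[OF intp]) auto
    finally show ?thesis .
  qed
  have 2: "(\<integral>\<^sup>+ w. e2ennreal (max 0 (- h w)) \<partial>M) = ennreal (\<integral>w. max 0 (- ?r w) \<partial>M)"
  proof -
    have "(\<integral>\<^sup>+ w. e2ennreal (max 0 (- h w)) \<partial>M) = (\<integral>\<^sup>+ w. ennreal (max 0 (- ?r w)) \<partial>M)"
    proof (rule nn_integral_cong_AE)
      show "AE w in M. e2ennreal (max 0 (- h w)) = ennreal (max 0 (- ?r w))"
        using fin
      proof (rule eventually_mono)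
        fix w assume "\<bar>h w\<bar> \<noteq> \<infinity>"
        then obtain r where "h w = ereal r" by (cases "h w") auto
        then show "e2ennreal (max 0 (- h w)) = ennreal (max 0 (- ?r w))"
          by (simp add: zero_ereal_def flip: ereal_max)
      qed
    qed
    also have "\<dots> = ennreal (\<integral>w. max 0 (- ?r w) \<partial>M)"
      by (rule nn_integral_eq_integral[OF intn]) auto
    finally show ?thesis .
  qed
  have ee0: "\<And>r::real. r = max 0 r - max 0 (- r)" by (simp add: max_def)
  have ee: "(\<lambda>w. ?r w) = (\<lambda>w. max 0 (?r w) - max 0 (- ?r w))"
    by (rule ext) (rule ee0)
  have "(\<integral>w. ?r w \<partial>M) = (\<integral>w. max 0 (?r w) - max 0 (- ?r w) \<partial>M)"
    by (subst ee) (rule refl)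
  also have "\<dots> = (\<integral>w. max 0 (?r w) \<partial>M) - (\<integral>w. max 0 (- ?r w) \<partial>M)"
    by (rule Bochner_Integration.integral_diff[OF intp intn])
  finally have 3: "(\<integral>w. ?r w \<partial>M) = (\<integral>w. max 0 (?r w) \<partial>M) - (\<integral>w. max 0 (- ?r w) \<partial>M)" .
  have p0: "(\<integral>w. max 0 (?r w) \<partial>M) \<ge> 0" "(\<integral>w. max 0 (- ?r w) \<partial>M) \<ge> 0"
    by (auto intro!: integral_nonneg_AE)
  show ?thesis
    unfolding ext_integral_def 1 2 3 using p0 by (simp add: enn2ereal_ennreal)
qed

lemma ext_integral_bounded_below:
  fixes h :: "'a \<Rightarrow> ereal"
  assumes fm: "finite_measure M"
    and h[measurable]: "h \<in> borel_measurable M"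
    and lb: "\<And>w. h w \<ge> ereal (- K)"
    and le: "ext_integral M h \<le> ereal b"
  shows "integrable M (\<lambda>w. real_of_ereal (h w))" "AE w in M. \<bar>h w\<bar> \<noteq> \<infinity>"
    "(\<integral>w. real_of_ereal (h w) \<partial>M) \<le> b"
proof -
  interpret finite_measure M by fact
  let ?A = "\<integral>\<^sup>+ w. e2ennreal (max 0 (h w)) \<partial>M"
  let ?B = "\<integral>\<^sup>+ w. e2ennreal (max 0 (- h w)) \<partial>M"
  have Bb: "e2ennreal (max 0 (- h w)) \<le> ennreal (max 0 K)" for w
  proof -
    have "max 0 (- h w) \<le> ereal (max 0 K)" using lb[of w]
      by (cases "h w") (auto simp: max_def)
    then have "e2ennreal (max 0 (- h w)) \<le> e2ennreal (ereal (max 0 K))"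
      by (rule e2ennreal_mono)
    then show ?thesis by (simp only: e2ennreal_ereal)
  qed
  have emf: "emeasure M (space M) < top"
    using emeasure_finite[of "space M"] top.not_eq_extremum by blast
  have Kc: "(\<integral>\<^sup>+ w. ennreal (max 0 K) \<partial>M) = ennreal (max 0 K) * emeasure M (space M)"
    by (rule nn_integral_const)
  have Kfin: "(\<integral>\<^sup>+ w. ennreal (max 0 K) \<partial>M) < top"
    unfolding Kc by (rule ennreal_mult_less_top[THEN iffD2, OF disjI2[OF disjI2[OF conjI[OF ennreal_less_top emf]]]])
  have "?B \<le> (\<integral>\<^sup>+ w. ennreal (max 0 K) \<partial>M)"
    by (intro nn_integral_mono Bb)
  also note Kfin
  finally have Bfin: "?B < top" .
  have Afin: "?A < top"
  proof (rule ccontr)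
    assume "\<not> ?A < top"
    then have "?A = top" by (metis top.not_eq_extremum)
    then have "ext_integral M h = \<infinity>"
      unfolding ext_integral_def using Bfin by (simp add: less_top)
    with le show False by simp
  qed
  have hm: "(\<lambda>w. e2ennreal (max 0 (h w))) \<in> borel_measurable M" by measurable
  have AEfin: "AE w in M. \<bar>h w\<bar> \<noteq> \<infinity>"
  proof -
    have "AE w in M. e2ennreal (max 0 (h w)) \<noteq> \<infinity>"
      using nn_integral_PInf_AE[OF hm] Afin by simp
    then show ?thesis
    proof (rule eventually_mono)
      fix w assume "e2ennreal (max 0 (h w)) \<noteq> \<infinity>"
      then show "\<bar>h w\<bar> \<noteq> \<infinity>" using lb[of w] by (cases "h w") auto
    qed
  qed
  show "AE w in M. \<bar>h w\<bar> \<noteq> \<infinity>" by fact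
  have int: "integrable M (\<lambda>w. real_of_ereal (h w))"
  proof (rule integrableI_bounded)
    show "(\<lambda>w. real_of_ereal (h w)) \<in> borel_measurable M" by measurable
    have "(\<integral>\<^sup>+ w. ennreal (norm (real_of_ereal (h w))) \<partial>M)
        \<le> (\<integral>\<^sup>+ w. e2ennreal (max 0 (h w)) + ennreal (max 0 K) \<partial>M)"
    proof (intro nn_integral_mono)
      fix w
      show "ennreal (norm (real_of_ereal (h w))) \<le> e2ennreal (max 0 (h w)) + ennreal (max 0 K)"
      proof (cases "h w")
        case (real r)
        then have "- K \<le> r" using lb[of w] by simp
        show ?thesis
        proof (cases "r \<ge> 0")
          case True
          then have "ennreal (norm (real_of_ereal (h w))) = e2ennreal (max 0 (h w))"
            using real by (simp add: e2ennreal_ereal max_def)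
          then show ?thesis by (simp add: add_increasing2)
        next
          case False
          then have "ennreal (norm (real_of_ereal (h w))) \<le> ennreal (max 0 K)"
            using real \<open>- K \<le> r\<close> by (intro ennreal_leI) auto
          then show ?thesis by (simp add: add_increasing)
        qed
      qed auto
    qed
    also have "\<dots> = ?A + (\<integral>\<^sup>+ w. ennreal (max 0 K) \<partial>M)"
      by (intro nn_integral_add) auto
    also have "\<dots> < top" by (rule ennreal_add_less_top[THEN iffD2, OF conjI[OF Afin Kfin]])
    finally show "(\<integral>\<^sup>+ w. ennreal (norm (real_of_ereal (h w))) \<partial>M) < \<infinity>" by simp
  qed
  show "integrable M (\<lambda>w. real_of_ereal (h w))" by fact
  show "(\<integral>w. real_of_ereal (h w) \<partial>M) \<le> b"
    using le ext_integral_real[OF h int AEfin] by simp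
qed

lemma quantile_exists:
  fixes X :: "'a \<Rightarrow> real"
  assumes ps: "prob_space M" and Xm[measurable]: "X \<in> borel_measurable M"
    and l1: "measure M {w\<in>space M. X w \<le> l} = 1"
    and e: "0 < \<epsilon>" "\<epsilon> < 1"
  shows "\<exists>q. measure M {w\<in>space M. X w < q} \<le> 1 - \<epsilon> \<and> measure M {w\<in>space M. q < X w} \<le> \<epsilon>"
proof -
  interpret prob_space M by fact
  define S where "S x = {w\<in>space M. x \<le> X w}" for x
  have Ssets[measurable]: "S x \<in> sets M" for x unfolding S_def by measurable
  have Smono: "x \<le> y \<Longrightarrow> prob (S y) \<le> prob (S x)" for x y
    by (intro finite_measure_mono) (auto simp: S_def)
  define A where "A = {x. prob (S x) \<ge> \<epsilon>}"
  have nl: "prob {w\<in>space M. l < X w} = 0"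
  proof -
    have "{w\<in>space M. l < X w} = space M - {w\<in>space M. X w \<le> l}" by auto
    then show ?thesis using l1 by (simp add: prob_compl)
  qed
  have Abd: "x \<le> l" if "x \<in> A" for x
  proof (rule ccontr)
    assume "\<not> x \<le> l"
    then have "S x \<subseteq> {w\<in>space M. l < X w}" by (auto simp: S_def)
    then have "prob (S x) \<le> prob {w\<in>space M. l < X w}" by (rule finite_measure_mono) measurable
    then have "prob (S x) \<le> 0" using nl by simp
    with that e show False by (simp add: A_def)
  qed
  have Ane: "A \<noteq> {}"
  proof -
    have inc: "incseq (\<lambda>n. S (- real n))" by (auto simp: incseq_def S_def)
    have un: "(\<Union>n. S (- real n)) = space M"
    proof -
      have "\<exists>n. - real n \<le> X w" for w
        using reals_Archimedean2[of "- X w"] by (metis less_eq_real_def minus_less_iff)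
      then show ?thesis by (auto simp: S_def)
    qed
    have "(\<lambda>n. prob (S (- real n))) \<longlonglongrightarrow> prob (\<Union>n. S (- real n))"
      by (rule finite_Lim_measure_incseq) (auto simp: inc)
    then have "(\<lambda>n. prob (S (- real n))) \<longlonglongrightarrow> 1" using un prob_space by simp
    then have "eventually (\<lambda>n. \<epsilon> < prob (S (- real n))) sequentially"
      using e by (intro order_tendstoD(1)) auto
    then obtain n where "\<epsilon> < prob (S (- real n))" unfolding eventually_sequentially by blast
    then have "- real n \<in> A" by (simp add: A_def)
    then show ?thesis by blast
  qed
  have bdd: "bdd_above A" using Abd by (auto simp: bdd_above_def)
  define q where "q = Sup A"
  have "prob (S q) \<ge> \<epsilon>"
  proof -
    define T where "T n = S (q - 1 / (real n + 1))" for n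
    have dec: "decseq T"
    proof (rule decseq_SucI)
      fix n
      have "1 / (real (Suc n) + 1) \<le> 1 / (real n + 1)" by (intro divide_left_mono) auto
      then show "T (Suc n) \<subseteq> T n" by (auto simp: T_def S_def)
    qed
    have "(\<Inter>n. T n) = S q"
    proof
      show "S q \<subseteq> (\<Inter>n. T n)" unfolding T_def S_def
        by auto (smt (verit, best) divide_nonneg_nonneg of_nat_0_le_iff)
      show "(\<Inter>n. T n) \<subseteq> S q"
      proof
        fix w assume w: "w \<in> (\<Inter>n. T n)"
        then have wm: "w \<in> space M" by (auto simp: T_def S_def)
        have "q \<le> X w"
        proof (rule ccontr)
          assume "\<not> q \<le> X w"
          then obtain n where "1 / (real n + 1) < q - X w"
            using reals_Archimedean[of "q - X w"] by (auto simp: inverse_eq_divide add.commute)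
          moreover have "q - 1 / (real n + 1) \<le> X w" using w by (auto simp: T_def S_def)
          ultimately show False by simp
        qed
        then show "w \<in> S q" using wm by (simp add: S_def)
      qed
    qed
    moreover have "(\<lambda>n. prob (T n)) \<longlonglongrightarrow> prob (\<Inter>n. T n)"
      using dec by (rule finite_Lim_measure_decseq[rotated]) (auto simp: T_def)
    ultimately have lim: "(\<lambda>n. prob (T n)) \<longlonglongrightarrow> prob (S q)" by simp
    have "\<epsilon> \<le> prob (T n)" for n
    proof -
      have "q - 1 / (real n + 1) < Sup A" unfolding q_def by simp
      then obtain a where a: "a \<in> A" "q - 1 / (real n + 1) < a"
        using less_cSup_iff[OF Ane bdd] by blast
      then have "prob (S a) \<le> prob (T n)" unfolding T_def by (intro Smono) simp
      with a show ?thesis by (simp add: A_def)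
    qed
    then show ?thesis by (intro LIMSEQ_le_const[OF lim]) auto
  qed
  moreover have "{w\<in>space M. X w < q} = space M - S q" by (auto simp: S_def)
  ultimately have r1: "measure M {w\<in>space M. X w < q} \<le> 1 - \<epsilon>"
    by (simp add: prob_compl)
  have "prob {w\<in>space M. q < X w} \<le> \<epsilon>"
  proof -
    define U where "U n = S (q + 1 / (real n + 1))" for n
    have inc: "incseq U"
    proof (rule incseq_SucI)
      fix n
      have "1 / (real (Suc n) + 1) \<le> 1 / (real n + 1)" by (intro divide_left_mono) auto
      then show "U n \<subseteq> U (Suc n)" by (auto simp: U_def S_def)
    qed
    have un: "(\<Union>n. U n) = {w\<in>space M. q < X w}"
    proof
      show "(\<Union>n. U n) \<subseteq> {w\<in>space M. q < X w}" unfolding U_def S_def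
        by auto (smt (verit, best) divide_pos_pos of_nat_0_le_iff)
      show "{w\<in>space M. q < X w} \<subseteq> (\<Union>n. U n)"
      proof
        fix w assume w: "w \<in> {w\<in>space M. q < X w}"
        then obtain n where "1 / (real n + 1) < X w - q"
          using reals_Archimedean[of "X w - q"] by (auto simp: inverse_eq_divide add.commute)
        then have "w \<in> U n" using w by (auto simp: U_def S_def)
        then show "w \<in> (\<Union>n. U n)" by blast
      qed
    qed
    have "(\<lambda>n. prob (U n)) \<longlonglongrightarrow> prob (\<Union>n. U n)"
      using inc by (rule finite_Lim_measure_incseq[rotated]) (auto simp: U_def)
    then have lim: "(\<lambda>n. prob (U n)) \<longlonglongrightarrow> prob {w\<in>space M. q < X w}" using un by simp
    have "prob (U n) \<le> \<epsilon>" for n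
    proof (rule ccontr)
      assume "\<not> prob (U n) \<le> \<epsilon>"
      then have "q + 1 / (real n + 1) \<in> A" by (simp add: A_def U_def)
      then have "q + 1 / (real n + 1) \<le> q" unfolding q_def by (rule cSup_upper[OF _ bdd])
      then show False by (smt (verit) divide_pos_pos of_nat_0_le_iff)
    qed
    then show ?thesis by (intro LIMSEQ_le_const2[OF lim]) auto
  qed
  with r1 show ?thesis by blast
qed

lemma pw_gen:
  fixes g :: "real \<Rightarrow> ereal"
  assumes fin: "\<forall>y. conj_fun g y \<noteq> \<infinity> \<and> conj_fun g y \<noteq> -\<infinity>"
    and t: "t > 0" and gz: "g z \<noteq> \<infinity>"
  shows "z * v \<le> Lfun g \<beta> v \<mu> t - t * \<mu> + t * real_of_ereal (g z) + t * \<mu> * z - t * \<beta> * z"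
proof -
  let ?y = "v / t - \<mu> + \<beta>"
  have fy: "z * ?y - real_of_ereal (g z) \<le> real_of_ereal (conj_fun g ?y)"
    by (rule conj_FY[OF fin gz])
  then have "t * (z * ?y - real_of_ereal (g z)) \<le> t * real_of_ereal (conj_fun g ?y)"
    using t by (intro mult_left_mono) auto
  moreover have "t * (z * ?y - real_of_ereal (g z)) = z * v - t * \<mu> * z + t * \<beta> * z - t * real_of_ereal (g z)"
    using t by (simp add: field_simps)
  ultimately show ?thesis unfolding Lfun_def by (simp add: algebra_simps)
qed

lemma pw:
  fixes g :: "real \<Rightarrow> ereal"
  assumes fin: "\<forall>y. conj_fun g y \<noteq> \<infinity> \<and> conj_fun g y \<noteq> -\<infinity>"
    and t: "t > 0" and gz: "g z \<noteq> \<infinity>" and z0: "z \<ge> 0"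
    and Lx: "Lfun g \<beta> x \<mu> t \<le> u" and qs: "q \<le> s" and Ls: "Lfun g \<beta> s \<mu> t \<le> a"
  shows "z * x \<le> (if x \<le> q then min a u else u) - t * \<mu> + t * real_of_ereal (g z) + t * \<mu> * z - t * \<beta> * z"
proof -
  let ?R = "- t * \<mu> + t * real_of_ereal (g z) + t * \<mu> * z - t * \<beta> * z"
  have 1: "z * x \<le> u + ?R" using pw_gen[OF fin t gz, of x \<beta> \<mu>] Lx by simp
  show ?thesis
  proof (cases "x \<le> q")
    case True
    then have "z * x \<le> z * s" using qs z0 by (intro mult_left_mono) auto
    also have "\<dots> \<le> a + ?R" using pw_gen[OF fin t gz, of s \<beta> \<mu>] Ls by simp
    finally have "z * x \<le> a + ?R" .
    with 1 True show ?thesis by (simp add: min_def)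
  next
    case False with 1 show ?thesis by simp
  qed
qed

lemma key_bound:
  fixes M :: "'a measure" and X :: "'a \<Rightarrow> real" and g :: "real \<Rightarrow> ereal" and Q :: "'a measure"
  assumes ps: "prob_space M" and Xm[measurable]: "X \<in> borel_measurable M"
    and fin: "\<forall>y. conj_fun g y \<noteq> \<infinity> \<and> conj_fun g y \<noteq> -\<infinity>"
    and gm[measurable]: "g \<in> borel_measurable borel"
    and Qs: "sets Q = sets M" and Qp: "prob_space Q" and ac: "absolutely_continuous M Q"
    and Qg: "ext_integral M (\<lambda>w. g (enn2real (RN_deriv M Q w))) \<le> ereal \<beta>"
    and lAE: "AE w in M. X w \<le> l"
    and uAE: "AE w in M. Lfun g \<beta> (X w) \<mu> t \<le> u"
    and t: "t > 0"
    and pq: "measure M {w\<in>space M. q < X w} \<le> \<epsilon>" and e: "\<epsilon> \<le> 1"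
    and qs: "q \<le> s" and Ls: "Lfun g \<beta> s \<mu> t \<le> a"
  shows "ext_integral Q (\<lambda>w. ereal (X w)) \<le> ereal (a * (1 - \<epsilon>) + u * \<epsilon>)"
proof -
  interpret prob_space M by fact
  interpret Q: prob_space Q by fact
  let ?z = "RN_deriv M Q"
  define zr where "zr w = enn2real (?z w)" for w
  have zrm[measurable]: "zr \<in> borel_measurable M" unfolding zr_def by measurable
  have zr0: "zr w \<ge> 0" for w unfolding zr_def by simp
  have dQ: "density M ?z = Q" by (rule density_RN_deriv[OF ac Qs])
  have zfin: "AE w in M. ?z w \<noteq> \<infinity>"
    by (rule RN_deriv_finite[OF Q.sigma_finite_measure_axioms ac Qs])
  have zAE: "AE w in M. ?z w = ennreal (zr w)"
    using zfin by eventually_elim (simp add: zr_def less_top)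
  have m1: "?z \<in> borel_measurable M" by measurable
  have m2: "(\<lambda>w. ennreal (zr w)) \<in> borel_measurable M" by measurable
  have "density M ?z = density M (\<lambda>w. ennreal (zr w))"
    by (rule density_cong[OF m1 m2 zAE])
  with dQ have Qr: "Q = density M (\<lambda>w. ennreal (zr w))" by simp
  have spQ: "space Q = space M" using Qs by (rule sets_eq_imp_space_eq)
  have nnz: "(\<integral>\<^sup>+ w. ennreal (zr w) \<partial>M) = 1"
  proof -
    have "emeasure Q (space Q) = 1" by (rule Q.emeasure_space_1)
    then have "emeasure (density M (\<lambda>w. ennreal (zr w))) (space M) = 1" using Qr spQ by simp
    then show ?thesis by (simp add: emeasure_density)
  qed
  have intz: "integrable M zr"
    by (rule integrableI_nonneg) (auto simp: nnz zr0)
  have intz1: "(\<integral>w. zr w \<partial>M) = 1"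
    using nn_integral_eq_integral[OF intz] nnz zr0 by simp
  have hm: "(\<lambda>w. g (enn2real (?z w))) \<in> borel_measurable M" by measurable
  have lb: "\<And>w. g (enn2real (?z w)) \<ge> ereal (- real_of_ereal (conj_fun g 0))"
    by (rule g_lower[OF fin])
  note bb = ext_integral_bounded_below[OF finite_measure_axioms hm lb Qg]
  define G where "G = (\<lambda>w. real_of_ereal (g (zr w)))"
  have intG: "integrable M G" using bb(1) by (simp add: G_def zr_def)
  have Gle: "(\<integral>w. G w \<partial>M) \<le> \<beta>" using bb(3) by (simp add: G_def zr_def)
  have AEG: "AE w in M. g (zr w) \<noteq> \<infinity>" using bb(2) by eventually_elim (auto simp: zr_def)
  have XQ[measurable]: "X \<in> borel_measurable Q"
    by (rule measurable_cong_sets[OF Qs refl, THEN equalityD2, THEN subsetD, OF Xm])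
  show ?thesis
  proof (cases "integrable Q X")
    case True
    have intQX: "integrable M (\<lambda>w. zr w * X w)"
      using True integrable_density[of X M zr] zr0 unfolding Qr by simp
    have iQX: "(\<integral>w. X w \<partial>Q) = (\<integral>w. zr w * X w \<partial>M)"
      using integral_density[of X M zr] zr0 unfolding Qr by simp
    have ext: "ext_integral Q (\<lambda>w. ereal (X w)) = ereal (\<integral>w. X w \<partial>Q)"
      using ext_integral_real[of "\<lambda>w. ereal (X w)" Q] True by simp
    define m where "m = min a u"
    define Y where "Y = {w\<in>space M. q < X w}"
    have Ym[measurable]: "Y \<in> sets M" unfolding Y_def by measurable
    define R where "R = (\<lambda>w. (m - t * \<mu>) + (u - m) * indicator Y w + t * G w + (t * \<mu> - t * \<beta>) * zr w)"
    have AEle: "AE w in M. zr w * X w \<le> R w"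
      using uAE AEG AE_space
    proof eventually_elim
      case (elim w)
      have "zr w * X w \<le> (if X w \<le> q then min a u else u) - t * \<mu> + t * real_of_ereal (g (zr w)) + t * \<mu> * zr w - t * \<beta> * zr w"
        by (rule pw[OF fin t elim(2) zr0 elim(1) qs Ls])
      then show ?case
        unfolding R_def G_def m_def
        using elim(3) by (cases "X w \<le> q") (auto simp: Y_def indicator_def algebra_simps)
    qed
    have Yfin: "emeasure M Y < \<infinity>" using emeasure_finite[of Y] by (metis infinity_ennreal_def top.not_eq_extremum)
    have intR: "integrable M R" unfolding R_def
      by (intro Bochner_Integration.integrable_add integrable_mult_right integrable_real_indicator intG intz Yfin Ym integrable_const)
    have "(\<integral>w. zr w * X w \<partial>M) \<le> (\<integral>w. R w \<partial>M)"
      by (rule integral_mono_AE[OF intQX intR AEle])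
    also have "(\<integral>w. R w \<partial>M) = (m - t * \<mu>) + (u - m) * measure M Y + t * (\<integral>w. G w \<partial>M) + (t * \<mu> - t * \<beta>) * (\<integral>w. zr w \<partial>M)"
      unfolding R_def
      by (subst Bochner_Integration.integral_add Bochner_Integration.integral_mult_right integral_mult_right_zero;
          (intro Bochner_Integration.integrable_add integrable_mult_right integrable_real_indicator intG intz Yfin Ym integrable_const)?; auto simp: prob_space)+
    also have "\<dots> \<le> (m - t * \<mu>) + (u - m) * \<epsilon> + t * \<beta> + (t * \<mu> - t * \<beta>)"
    proof -
      have "(u - m) * measure M Y \<le> (u - m) * \<epsilon>"
        using pq by (intro mult_left_mono) (auto simp: Y_def m_def)
      moreover have "t * (\<integral>w. G w \<partial>M) \<le> t * \<beta>" using Gle t by (intro mult_left_mono) auto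
      ultimately show ?thesis using intz1 by simp
    qed
    also have "\<dots> = m * (1 - \<epsilon>) + u * \<epsilon>" by (simp add: algebra_simps)
    also have "\<dots> \<le> a * (1 - \<epsilon>) + u * \<epsilon>"
      using e by (intro add_right_mono mult_right_mono) (auto simp: m_def)
    finally show ?thesis using ext iQX by simp
  next
    case False
    have lQ: "AE w in Q. X w \<le> l" by (rule absolutely_continuous_AE[OF Qs ac lAE])
    let ?A = "\<integral>\<^sup>+ w. e2ennreal (max 0 (ereal (X w))) \<partial>Q"
    let ?B = "\<integral>\<^sup>+ w. e2ennreal (max 0 (- ereal (X w))) \<partial>Q"
    have ep: "e2ennreal (max 0 (ereal x)) = ennreal (max 0 x)" for x
      by (simp add: e2ennreal_ereal zero_ereal_def flip: ereal_max)
    have en: "e2ennreal (max 0 (- ereal x)) = ennreal (max 0 (- x))" for x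
      by (simp add: e2ennreal_ereal zero_ereal_def flip: ereal_max)
    have "?A \<le> (\<integral>\<^sup>+ w. ennreal (max 0 l) \<partial>Q)"
      using lQ by (intro nn_integral_mono_AE) (auto simp: ep elim!: eventually_mono intro!: ennreal_leI)
    also have "\<dots> = ennreal (max 0 l)" using Q.emeasure_space_1 by simp
    finally have Afin: "?A < \<infinity>" by (simp add: le_less_trans)
    have Binf: "?B = \<infinity>"
    proof (rule ccontr)
      assume nB: "?B \<noteq> \<infinity>"
      have "integrable Q X"
      proof (rule integrableI_bounded)
        show "X \<in> borel_measurable Q" by measurable
        have "(\<integral>\<^sup>+ w. ennreal (norm (X w)) \<partial>Q) = (\<integral>\<^sup>+ w. e2ennreal (max 0 (ereal (X w))) + e2ennreal (max 0 (- ereal (X w))) \<partial>Q)"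
        proof (rule nn_integral_cong)
          fix w
          show "ennreal (norm (X w)) = e2ennreal (max 0 (ereal (X w))) + e2ennreal (max 0 (- ereal (X w)))"
            unfolding ep en by (cases "X w \<ge> 0") (auto simp: ennreal_neg max_def)
        qed
        also have "\<dots> = ?A + ?B" by (rule nn_integral_add) auto
        also have "\<dots> < \<infinity>" using Afin nB by (simp add: less_top)
        finally show "(\<integral>\<^sup>+ w. ennreal (norm (X w)) \<partial>Q) < \<infinity>" .
      qed
      with False show False by simp
    qed
    obtain r where r: "enn2ereal ?A = ereal r"
      using Afin by (cases "enn2ereal ?A") (auto simp: less_top)
    have "ext_integral Q (\<lambda>w. ereal (X w)) = -\<infinity>"
      unfolding ext_integral_def Binf using r by simp
    then show ?thesis by simp
  qed
qed

lemma id_meas_PiM: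
  fixes P :: "real measure"
  assumes sP: "sets P = sets borel"
  shows "(\<lambda>xs. xs) \<in> measurable (PiM {..<N} (\<lambda>_. P)) (borel :: (nat \<Rightarrow> real) measure)"
proof -
  have "(\<lambda>xs. xs) \<in> measurable (PiM {..<N} (\<lambda>_. P)) (Pi\<^sub>M UNIV (\<lambda>_. (borel :: real measure)))"
  proof (rule measurable_PiM_single')
    fix i :: nat
    show "(\<lambda>xs. xs i) \<in> measurable (PiM {..<N} (\<lambda>_. P)) borel"
    proof (cases "i < N")
      case True
      then have "(\<lambda>xs. xs i) \<in> measurable (PiM {..<N} (\<lambda>_. P)) P"
        by (intro measurable_component_singleton) auto
      then show ?thesis by (rule measurable_cong_sets[OF refl sP, THEN equalityD1, THEN subsetD])
    next
      case False
      have "(\<lambda>xs. undefined) \<in> measurable (PiM {..<N} (\<lambda>_. P)) (borel :: real measure)" by simp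
      moreover have "xs i = undefined" if "xs \<in> space (PiM {..<N} (\<lambda>_. P))" for xs
        using that False by (auto simp: space_PiM PiE_def extensional_def)
      ultimately show ?thesis using measurable_cong by (metis (no_types, lifting))
    qed
  qed auto
  then show ?thesis by (rule measurable_cong_sets[OF refl sets_PiM_equal_borel, THEN equalityD1, THEN subsetD])
qed

lemma closed_F:
  fixes g :: "real \<Rightarrow> ereal"
  assumes fin: "\<forall>y. conj_fun g y \<noteq> \<infinity> \<and> conj_fun g y \<noteq> -\<infinity>"
    and N: "N > 0" and e: "\<epsilon> < 1"
  shows "closed {v :: nat \<Rightarrow> real. C \<le> (INF p \<in> I.
                     ereal (zeta_star g \<beta> N v (fst p) (snd p) * (1 - \<epsilon>)
                            + ub (fst p) (snd p) * \<epsilon>))}"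
proof -
  have eq: "{v :: nat \<Rightarrow> real. C \<le> (INF p \<in> I. ereal (zeta_star g \<beta> N v (fst p) (snd p) * (1 - \<epsilon>) + ub (fst p) (snd p) * \<epsilon>))}
     = (\<Inter>p\<in>I. {v. C \<le> ereal (zeta_star g \<beta> N v (fst p) (snd p) * (1 - \<epsilon>) + ub (fst p) (snd p) * \<epsilon>)})"
    by (auto simp: le_INF_iff)
  have cl: "closed {v :: nat \<Rightarrow> real. C \<le> ereal (zeta_star g \<beta> N v \<mu> t * (1 - \<epsilon>) + u * \<epsilon>)}" for \<mu> t u
  proof (cases C)
    case (real c)
    let ?c = "(c - u * \<epsilon>) / (1 - \<epsilon>)"
    have "{v :: nat \<Rightarrow> real. C \<le> ereal (zeta_star g \<beta> N v \<mu> t * (1 - \<epsilon>) + u * \<epsilon>)}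
        = (\<Union>k\<in>{..<N}. {v. ?c \<le> Lfun g \<beta> (v k) \<mu> t})"
    proof -
      have "C \<le> ereal (zeta_star g \<beta> N v \<mu> t * (1 - \<epsilon>) + u * \<epsilon>) \<longleftrightarrow> ?c \<le> zeta_star g \<beta> N v \<mu> t" for v
        using real e by (simp add: pos_divide_le_eq algebra_simps)
      moreover have "?c \<le> zeta_star g \<beta> N v \<mu> t \<longleftrightarrow> (\<exists>k\<in>{..<N}. ?c \<le> Lfun g \<beta> (v k) \<mu> t)" for v
        unfolding zeta_star_def using N by (subst Max_ge_iff) auto
      ultimately show ?thesis by auto
    qed
    moreover have "closed {v :: nat \<Rightarrow> real. ?c \<le> Lfun g \<beta> (v k) \<mu> t}" for k
    proof (rule closed_Collect_le)
      show "continuous_on UNIV (\<lambda>v :: nat \<Rightarrow> real. ?c)" by (rule continuous_on_const)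
      show "continuous_on UNIV (\<lambda>v :: nat \<Rightarrow> real. Lfun g \<beta> (v k) \<mu> t)"
        using continuous_on_compose2[OF L_cont[OF fin, of \<beta> \<mu> t] continuous_on_product_coordinates[of k]]
        by simp
    qed
    ultimately show ?thesis by (auto intro!: closed_UN)
  next
    case PInf
    then show ?thesis by simp
  next
    case MInf
    then show ?thesis by simp
  qed
  show ?thesis unfolding eq by (intro closed_INT ballI cl)
qed

theorem corollary2:
  fixes M :: "'a measure" and X :: "'a \<Rightarrow> real" and l :: real
    and g :: "real \<Rightarrow> ereal" and \<beta> :: real
    and ub :: "real \<Rightarrow> real \<Rightarrow> real"
    and \<gamma> \<epsilon> :: real and N :: nat
  assumes "prob_space M"
    and "X \<in> borel_measurable M"
    and "measure (distr M borel X) {..l} = 1"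
    and "closed_convex_fun g" and "g 1 = 0" and "\<beta> \<ge> 0"
    and "\<forall>y. conj_fun g y \<noteq> \<infinity> \<and> conj_fun g y \<noteq> -\<infinity>"
    and "\<forall>\<mu> t. t > 0 \<longrightarrow>
           measure (distr M borel X) {x. Lfun g \<beta> x \<mu> t \<le> ub \<mu> t} = 1"
    and "0 \<le> \<gamma>" and "\<gamma> < 1" and "0 < \<epsilon>" and "\<epsilon> < 1"
    and "real N \<ge> ln (1 - \<gamma>) / ln (1 - \<epsilon>)"
  shows "measure (PiM {..<N} (\<lambda>_. distr M borel X))
           {xs \<in> space (PiM {..<N} (\<lambda>_. distr M borel X)).
              entropic_risk M g \<beta> X
                \<le> (INF p \<in> UNIV \<times> {0<..}.
                     ereal (zeta_star g \<beta> N xs (fst p) (snd p) * (1 - \<epsilon>)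
                            + ub (fst p) (snd p) * \<epsilon>))} \<ge> \<gamma>"
proof -
  interpret prob_space M by fact
  note fin = assms(7)
  note Xm[measurable] = assms(2)
  let ?P = "distr M borel X"
  let ?Pm = "PiM {..<N} (\<lambda>_. ?P)"
  let ?ER = "entropic_risk M g \<beta> X"
  have Pps: "prob_space ?P" by (rule prob_space_distr[OF Xm])
  have sP: "sets ?P = sets borel" by simp
  have spP: "space ?P = UNIV" by simp
  have mP: "measure ?P A = measure M {w\<in>space M. X w \<in> A}" if "A \<in> sets borel" for A
  proof -
    have "measure ?P A = measure M (X -` A \<inter> space M)" by (rule measure_distr[OF Xm that])
    also have "X -` A \<inter> space M = {w\<in>space M. X w \<in> A}" by auto
    finally show ?thesis .
  qed
  have l1: "measure M {w\<in>space M. X w \<le> l} = 1"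
    using assms(3) mP[of "{..l}"] by simp
  have lAE: "AE w in M. X w \<le> l"
    using AE_prob_1[OF l1] by eventually_elim auto
  obtain q where q1: "measure M {w\<in>space M. X w < q} \<le> 1 - \<epsilon>"
    and q2: "measure M {w\<in>space M. q < X w} \<le> \<epsilon>"
    using quantile_exists[OF assms(1) Xm l1 assms(11,12)] by blast
  have uAE: "AE w in M. Lfun g \<beta> (X w) \<mu> t \<le> ub \<mu> t" if t: "t > 0" for \<mu> t
  proof -
    let ?S = "{x. Lfun g \<beta> x \<mu> t \<le> ub \<mu> t}"
    have S1: "measure ?P ?S = 1" using assms(8) t by blast
    have "?S \<in> sets ?P"
    proof (rule ccontr)
      assume "?S \<notin> sets ?P"
      then have "measure ?P ?S = 0" by (rule measure_notin_sets)
      with S1 show False by simp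
    qed
    then have Sb: "?S \<in> sets borel" by simp
    have "measure M {w\<in>space M. X w \<in> ?S} = 1" using S1 mP[OF Sb] by simp
    from AE_prob_1[OF this] show ?thesis by eventually_elim auto
  qed
  have gm: "g \<in> borel_measurable borel" by (rule g_meas[OF fin assms(4)])
  have pow: "(1 - \<epsilon>) ^ N \<le> 1 - \<gamma>"
  proof -
    have ln_neg: "ln (1 - \<epsilon>) < 0" using assms(11,12) by simp
    have "N * ln (1 - \<epsilon>) \<le> ln (1 - \<gamma>)"
      using assms(13) ln_neg by (simp add: divide_le_eq)
    moreover have "ln ((1 - \<epsilon>) ^ N) = N * ln (1 - \<epsilon>)"
      using assms(12) by (simp add: ln_realpow)
    ultimately have "ln ((1 - \<epsilon>) ^ N) \<le> ln (1 - \<gamma>)" by simp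
    then show ?thesis using assms(10,12) by (simp add: ln_le_cancel_iff)
  qed
  show ?thesis
  proof (cases "N = 0")
    case True
    then have "\<gamma> \<le> 0" using pow by simp
    then show ?thesis by (smt (verit) measure_nonneg)
  next
    case False
    then have N: "N > 0" by simp
    have sf: "sigma_finite_measure ?P" using Pps by (rule prob_space_imp_sigma_finite)
    have psf: "product_sigma_finite (\<lambda>_::nat. ?P)" by (rule product_sigma_finite.intro) (rule sf)
    have "finite_product_prob_space (\<lambda>_::nat. ?P) {..<N}"
      by (intro finite_product_prob_space.intro finite_product_sigma_finite.intro product_prob_space.intro psf)
         (simp_all add: finite_product_sigma_finite_axioms_def product_prob_space_axioms_def Pps)
    then interpret FP: finite_product_prob_space "\<lambda>_::nat. ?P" "{..<N}" .
    define Gd where "Gd = {xs \<in> space ?Pm. \<exists>k<N. q \<le> xs k}"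
    define T where "T = {xs \<in> space ?Pm. ?ER \<le> (INF p \<in> UNIV \<times> {0<..}.
                     ereal (zeta_star g \<beta> N xs (fst p) (snd p) * (1 - \<epsilon>)
                            + ub (fst p) (snd p) * \<epsilon>))}"
    have GT: "Gd \<subseteq> T"
    proof
      fix xs assume "xs \<in> Gd"
      then obtain k where xs: "xs \<in> space ?Pm" and k: "k < N" "q \<le> xs k" by (auto simp: Gd_def)
      have "?ER \<le> (INF p \<in> UNIV \<times> {0<..}.
                     ereal (zeta_star g \<beta> N xs (fst p) (snd p) * (1 - \<epsilon>)
                            + ub (fst p) (snd p) * \<epsilon>))"
        unfolding entropic_risk_def
      proof (rule SUP_least)
        fix Q assume "Q \<in> {Q. sets Q = sets M \<and> prob_space Q \<and> absolutely_continuous M Q \<and>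
                ext_integral M (\<lambda>w. g (enn2real (RN_deriv M Q w))) \<le> ereal \<beta>}"
        then have Qs: "sets Q = sets M" and Qp: "prob_space Q" and ac: "absolutely_continuous M Q"
          and Qg: "ext_integral M (\<lambda>w. g (enn2real (RN_deriv M Q w))) \<le> ereal \<beta>" by auto
        show "ext_integral Q (\<lambda>w. ereal (X w)) \<le> (INF p \<in> UNIV \<times> {0<..}.
                     ereal (zeta_star g \<beta> N xs (fst p) (snd p) * (1 - \<epsilon>)
                            + ub (fst p) (snd p) * \<epsilon>))"
        proof (rule INF_greatest)
          fix p :: "real \<times> real" assume "p \<in> UNIV \<times> {0<..}"
          then obtain \<mu> t where p: "p = (\<mu>, t)" and t: "t > 0" by (cases p) auto
          have Ls: "Lfun g \<beta> (xs k) \<mu> t \<le> zeta_star g \<beta> N xs \<mu> t"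
            unfolding zeta_star_def using k by (intro Max_ge) auto
          have "ext_integral Q (\<lambda>w. ereal (X w)) \<le> ereal (zeta_star g \<beta> N xs \<mu> t * (1 - \<epsilon>) + ub \<mu> t * \<epsilon>)"
            by (rule key_bound[OF assms(1) Xm fin gm Qs Qp ac Qg lAE uAE[OF t] t q2 _ k(2) Ls])
              (use assms(12) in simp)
          then show "ext_integral Q (\<lambda>w. ereal (X w)) \<le> ereal (zeta_star g \<beta> N xs (fst p) (snd p) * (1 - \<epsilon>) + ub (fst p) (snd p) * \<epsilon>)"
            by (simp add: p)
        qed
      qed
      then show "xs \<in> T" using xs by (simp add: T_def)
    qed
    have Tm: "T \<in> sets ?Pm"
    proof -
      have "(\<lambda>xs. xs) -` {v. ?ER \<le> (INF p \<in> UNIV \<times> {0<..}.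
                     ereal (zeta_star g \<beta> N v (fst p) (snd p) * (1 - \<epsilon>)
                            + ub (fst p) (snd p) * \<epsilon>))} \<inter> space ?Pm \<in> sets ?Pm"
        by (rule measurable_sets[OF id_meas_PiM[OF sP] borel_closed[OF closed_F[OF fin N assms(12)]]])
      moreover have "(\<lambda>xs. xs) -` {v. ?ER \<le> (INF p \<in> UNIV \<times> {0<..}.
                     ereal (zeta_star g \<beta> N v (fst p) (snd p) * (1 - \<epsilon>)
                            + ub (fst p) (snd p) * \<epsilon>))} \<inter> space ?Pm = T"
        by (auto simp: T_def)
      ultimately show ?thesis by simp
    qed
    have spPm: "space ?Pm = PiE {..<N} (\<lambda>_. UNIV)" by (simp add: space_PiM)
    have compl: "space ?Pm - Gd = PiE {..<N} (\<lambda>_. {..<q})"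
      unfolding Gd_def spPm by (auto simp: PiE_def Pi_def not_le)
    have PiEm: "PiE {..<N} (\<lambda>_. {..<q}) \<in> sets ?Pm"
      by (rule sets_PiM_I_finite) auto
    have "measure ?Pm (PiE {..<N} (\<lambda>_. {..<q})) = (\<Prod>i\<in>{..<N}. measure ?P {..<q})"
      by (rule FP.prob_times) simp
    also have "\<dots> = (measure ?P {..<q}) ^ N" by simp
    finally have mc: "measure ?Pm (space ?Pm - Gd) = (measure ?P {..<q}) ^ N" using compl by simp
    have Gm: "Gd \<in> sets ?Pm"
    proof -
      have "Gd = space ?Pm - (space ?Pm - Gd)" by (auto simp: Gd_def)
      then show ?thesis using compl PiEm by (metis sets.compl_sets)
    qed
    have "measure ?Pm Gd = 1 - (measure ?P {..<q}) ^ N"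
      using FP.prob_compl[OF Gm] mc by simp
    moreover have "(measure ?P {..<q}) ^ N \<le> (1 - \<epsilon>) ^ N"
    proof (rule power_mono)
      show "measure ?P {..<q} \<le> 1 - \<epsilon>" using q1 mP[of "{..<q}"] by simp
    qed simp
    moreover have "measure ?Pm Gd \<le> measure ?Pm T"
      by (rule FP.finite_measure_mono[OF GT Tm])
    ultimately have "\<gamma> \<le> measure ?Pm T" using pow by linarith
    then show ?thesis by (simp add: T_def)
  qed
qed

end
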